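(* Let $\{(\Gamma_t,\theta_t)\}_{t\in[0,\underline t)}$ solve the framed curvature flow. Then $$\frac{d}{dt}L(\Gamma_t)=-\int_{\Gamma_t}\kappa\psi_1\,ds,\qquad \frac{d}{dt}A(\Sigma_t)=\int_{\Gamma_t}\kappa\,ds .$$
   Context: $S^1=\mathbb{R}/2\pi\mathbb{Z}$; closed curves $\Gamma_t$ parametrized by $\gamma(t,\cdot):S^1\to\mathbb{R}^3$, $g=\|\partial_u\gamma\|$, $ds=g\,du$, $\partial_s=g^{-1}\partial_u$, $L(\Gamma_t)$ length; Frenet frame $T,N,B$, curvature $\kappa$; angle function $\theta$, $\nu_\theta=\cos\theta N+\sin\theta B$, $\psi_1=\kappa\cos\theta$. Framed curvature flow: $\partial_t\gamma=\kappa\nu_\theta$, $\partial_t\theta=\upsilon_\theta$ with some $\upsilon_\theta\in\mathcal C^1$. The trajectory surface $\Sigma_t=\bigcup_{t'\in[0,t)}\Gamma_{t'}$ is parametrized by $(t',u)\mapsto\gamma(t',u)$, and $A(\Sigma_t)=\int_0^t\int_{S^1}g\,\kappa\,du\,dt'$ is its area. *)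

theory Defs
  imports "HOL-Analysis.Analysis" "HOL-Analysis.Cross3"
begin

unbundle no cross3_syntax

text \<open>A time-dependent closed curve in R^3 is modelled as
  gam :: real \<Rightarrow> real \<Rightarrow> real^3, with gam t u the point with time t and
  parameter u; closedness = 2*pi periodicity in u (S^1 = R / 2 pi Z).
  Time ranges over an interval I (here I = {0..<tbar}); time derivatives
  are taken within I (one-sided at t = 0).\<close>

definition partial_u :: "(real \<Rightarrow> real \<Rightarrow> 'a::real_normed_vector) \<Rightarrow> real \<Rightarrow> real \<Rightarrow> 'a" where
  "partial_u f t u = vector_derivative (\<lambda>v. f t v) (at u)"

definition partial_t :: "real set \<Rightarrow> (real \<Rightarrow> real \<Rightarrow> 'a::real_normed_vector) \<Rightarrow> real \<Rightarrow> real \<Rightarrow> 'a" where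
  "partial_t I f t u = vector_derivative (\<lambda>s. f s u) (at t within I)"

definition C1_flow :: "real set \<Rightarrow> (real \<Rightarrow> real \<Rightarrow> 'a::real_normed_vector) \<Rightarrow> bool" where
  "C1_flow I f \<longleftrightarrow>
     (\<forall>t\<in>I. \<forall>u. (\<lambda>s. f s u) differentiable (at t within I) \<and> (\<lambda>v. f t v) differentiable (at u)) \<and>
     continuous_on (I \<times> UNIV) (\<lambda>(t,u). f t u) \<and>
     continuous_on (I \<times> UNIV) (\<lambda>(t,u). partial_t I f t u) \<and>
     continuous_on (I \<times> UNIV) (\<lambda>(t,u). partial_u f t u)"

definition speed :: "(real \<Rightarrow> real \<Rightarrow> real^3) \<Rightarrow> real \<Rightarrow> real \<Rightarrow> real" where
  "speed gam t u = norm (partial_u gam t u)"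

definition tangent :: "(real \<Rightarrow> real \<Rightarrow> real^3) \<Rightarrow> real \<Rightarrow> real \<Rightarrow> real^3" where
  "tangent gam t u = (1 / speed gam t u) *\<^sub>R partial_u gam t u"

definition curvature :: "(real \<Rightarrow> real \<Rightarrow> real^3) \<Rightarrow> real \<Rightarrow> real \<Rightarrow> real" where
  "curvature gam t u = norm ((1 / speed gam t u) *\<^sub>R partial_u (tangent gam) t u)"

definition normal :: "(real \<Rightarrow> real \<Rightarrow> real^3) \<Rightarrow> real \<Rightarrow> real \<Rightarrow> real^3" where
  "normal gam t u = (1 / (speed gam t u * curvature gam t u)) *\<^sub>R partial_u (tangent gam) t u"

definition binormal :: "(real \<Rightarrow> real \<Rightarrow> real^3) \<Rightarrow> real \<Rightarrow> real \<Rightarrow> real^3" where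
  "binormal gam t u = cross3 (tangent gam t u) (normal gam t u)"

definition nu_theta :: "(real \<Rightarrow> real \<Rightarrow> real^3) \<Rightarrow> (real \<Rightarrow> real \<Rightarrow> real) \<Rightarrow> real \<Rightarrow> real \<Rightarrow> real^3" where
  "nu_theta gam \<theta> t u = cos (\<theta> t u) *\<^sub>R normal gam t u + sin (\<theta> t u) *\<^sub>R binormal gam t u"

definition psi1 :: "(real \<Rightarrow> real \<Rightarrow> real^3) \<Rightarrow> (real \<Rightarrow> real \<Rightarrow> real) \<Rightarrow> real \<Rightarrow> real \<Rightarrow> real" where
  "psi1 gam \<theta> t u = curvature gam t u * cos (\<theta> t u)"

definition curve_length :: "(real \<Rightarrow> real \<Rightarrow> real^3) \<Rightarrow> real \<Rightarrow> real" where
  "curve_length gam t = integral {0..2*pi} (\<lambda>u. speed gam t u)"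

definition traj_area :: "(real \<Rightarrow> real \<Rightarrow> real^3) \<Rightarrow> real \<Rightarrow> real" where
  "traj_area gam t = integral {0..t} (\<lambda>t'. integral {0..2*pi} (\<lambda>u. speed gam t' u * curvature gam t' u))"

text \<open>Framed curvature flow on [0, tbar): closed regular curves with positive curvature
  (so that the Frenet frame exists), smooth enough, d gam/dt = kappa nu_theta,
  d theta/dt = upsilon with upsilon C^1.\<close>
definition framed_curvature_flow ::
  "real \<Rightarrow> (real \<Rightarrow> real \<Rightarrow> real^3) \<Rightarrow> (real \<Rightarrow> real \<Rightarrow> real) \<Rightarrow> (real \<Rightarrow> real \<Rightarrow> real) \<Rightarrow> bool" where
  "framed_curvature_flow tbar gam \<theta> \<upsilon> \<longleftrightarrow>
     (let I = {0..<tbar} in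
       0 < tbar \<and>
       C1_flow I gam \<and> C1_flow I (partial_u gam) \<and> C1_flow I (partial_u (partial_u gam)) \<and>
       C1_flow I \<theta> \<and> C1_flow I \<upsilon> \<and>
       (\<forall>t\<in>I. \<forall>u. gam t (u + 2*pi) = gam t u \<and> \<theta> t (u + 2*pi) = \<theta> t u) \<and>
       (\<forall>t\<in>I. \<forall>u. speed gam t u > 0 \<and> curvature gam t u > 0) \<and>
       (\<forall>t\<in>I. \<forall>u. ((\<lambda>s. gam s u) has_vector_derivative
                      (curvature gam t u *\<^sub>R nu_theta gam \<theta> t u)) (at t within I)) \<and>
       (\<forall>t\<in>I. \<forall>u. ((\<lambda>s. \<theta> s u) has_real_derivative \<upsilon> t u) (at t within I)))"

end

theory Submission imports Defs begin

lemma shift_deriv: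
  fixes h :: "real \<Rightarrow> 'a::real_normed_vector"
  assumes per: "\<And>v. h (v + p) = h v"
  shows "(h has_vector_derivative D) (at (u + p)) \<longleftrightarrow> (h has_vector_derivative D) (at u)"
proof
  assume a: "(h has_vector_derivative D) (at (u + p))"
  have "((\<lambda>v. v + p) has_vector_derivative 1) (at u)"
    by (auto intro!: derivative_eq_intros)
  from vector_diff_chain_at[OF this] a have "((h \<circ> (\<lambda>v. v + p)) has_vector_derivative D) (at u)" by auto
  thus "(h has_vector_derivative D) (at u)" using per by (simp add: o_def)
next
  assume a: "(h has_vector_derivative D) (at u)"
  have "((\<lambda>v. v - p) has_vector_derivative 1) (at (u+p))"
    by (auto intro!: derivative_eq_intros)
  from vector_diff_chain_at[OF this] a have "((h \<circ> (\<lambda>v. v - p)) has_vector_derivative D) (at (u+p))" by auto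
  moreover have "h \<circ> (\<lambda>v. v - p) = h" using per[of "_ - p"] by (auto simp: o_def)
  ultimately show "(h has_vector_derivative D) (at (u+p))" by simp
qed

lemma partial_u_periodic:
  assumes "\<And>v. f t (v + p) = f t v"
  shows "partial_u f t (u + p) = partial_u f t u"
  unfolding partial_u_def vector_derivative_def
  using shift_deriv[of "\<lambda>v. f t v" p, OF assms] by simp

lemma vd_norm:
  fixes f :: "real \<Rightarrow> 'a::real_inner"
  assumes "(f has_vector_derivative f') (at x within S)" "f x \<noteq> 0"
  shows "((\<lambda>s. norm (f s)) has_real_derivative (f x \<bullet> f') / norm (f x)) (at x within S)"
proof -
  have "((\<lambda>s. norm (f s)) has_derivative (\<lambda>h. (h *\<^sub>R f') \<bullet> sgn (f x))) (at x within S)"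
    using has_derivative_compose[OF assms(1)[unfolded has_vector_derivative_def] has_derivative_norm[OF assms(2)]]
    by (simp add: o_def)
  moreover have "(\<lambda>h. (h *\<^sub>R f') \<bullet> sgn (f x)) = (*) ((f x \<bullet> f') / norm (f x))"
    by (rule ext) (auto simp: sgn_div_norm inner_commute field_simps)
  ultimately show ?thesis unfolding has_field_derivative_def
    by (simp only:)
qed


lemma not_bot_Ico: "0 \<le> t \<Longrightarrow> t < (tb::real) \<Longrightarrow> at t within {0..<tb} \<noteq> bot"
  using trivial_limit_within[of t "{0..<tb}"] islimpt_Ico[of 0 tb t] by auto

lemma cont_slice:
  assumes "continuous_on (I \<times> UNIV) (\<lambda>(t,u). f t u)" "t \<in> I"
  shows "continuous_on S (\<lambda>u. f t u)"
proof -
  have "continuous_on S (\<lambda>u. (t,u))" by (intro continuous_intros)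
  moreover have "(\<lambda>u. (t,u)) ` S \<subseteq> I \<times> UNIV" using assms(2) by auto
  ultimately show ?thesis
    using continuous_on_compose2[OF assms(1), of S "\<lambda>u. (t,u)"] by auto
qed

lemma cont_fst_snd:
  assumes "continuous_on (I \<times> UNIV) (\<lambda>(t,u). f t u)"
  shows "continuous_on (I \<times> UNIV) (\<lambda>p. f (fst p) (snd p))"
  using assms by (simp add: case_prod_beta)

definition Tp :: "(real \<Rightarrow> real \<Rightarrow> real^3) \<Rightarrow> real \<Rightarrow> real \<Rightarrow> real^3" where
  "Tp gam t u = (1 / speed gam t u) *\<^sub>R partial_u (partial_u gam) t u
     - ((partial_u gam t u \<bullet> partial_u (partial_u gam) t u) / speed gam t u ^ 3) *\<^sub>R partial_u gam t u"

context
  fixes tbar :: real and gam :: "real \<Rightarrow> real \<Rightarrow> real^3"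
    and \<theta> \<upsilon> :: "real \<Rightarrow> real \<Rightarrow> real"
  assumes flow: "framed_curvature_flow tbar gam \<theta> \<upsilon>"
begin

lemma tbar_pos: "0 < tbar" using flow by (simp add: framed_curvature_flow_def Let_def)
lemma C1g: "C1_flow {0..<tbar} gam" using flow by (simp add: framed_curvature_flow_def Let_def)
lemma C1gu: "C1_flow {0..<tbar} (partial_u gam)" using flow by (simp add: framed_curvature_flow_def Let_def)
lemma C1guu: "C1_flow {0..<tbar} (partial_u (partial_u gam))" using flow by (simp add: framed_curvature_flow_def Let_def)
lemma perg: "t \<in> {0..<tbar} \<Longrightarrow> gam t (u + 2*pi) = gam t u" using flow by (simp add: framed_curvature_flow_def Let_def)
lemma perth: "t \<in> {0..<tbar} \<Longrightarrow> \<theta> t (u + 2*pi) = \<theta> t u" using flow by (simp add: framed_curvature_flow_def Let_def)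
lemma spos: "t \<in> {0..<tbar} \<Longrightarrow> speed gam t u > 0" using flow by (simp add: framed_curvature_flow_def Let_def)
lemma kpos: "t \<in> {0..<tbar} \<Longrightarrow> curvature gam t u > 0" using flow by (simp add: framed_curvature_flow_def Let_def)
lemma floweq: "t \<in> {0..<tbar} \<Longrightarrow> ((\<lambda>s. gam s u) has_vector_derivative
                      (curvature gam t u *\<^sub>R nu_theta gam \<theta> t u)) (at t within {0..<tbar})"
  using flow by (simp add: framed_curvature_flow_def Let_def)

lemma F1: "t \<in> {0..<tbar} \<Longrightarrow> ((\<lambda>v. gam t v) has_vector_derivative partial_u gam t u) (at u)"
  using C1g unfolding C1_flow_def partial_u_def by (simp add: vector_derivative_works)
lemma F2: "t \<in> {0..<tbar} \<Longrightarrow> ((\<lambda>v. partial_u gam t v) has_vector_derivative partial_u (partial_u gam) t u) (at u)"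
  using C1gu unfolding C1_flow_def by (simp add: vector_derivative_works partial_u_def[of "partial_u gam"])
lemma F3: "t \<in> {0..<tbar} \<Longrightarrow> ((\<lambda>s. partial_u gam s u) has_vector_derivative partial_t {0..<tbar} (partial_u gam) t u) (at t within {0..<tbar})"
  using C1gu unfolding C1_flow_def by (simp add: vector_derivative_works partial_t_def)
lemma contG: "continuous_on ({0..<tbar} \<times> UNIV) (\<lambda>(t,u). partial_u gam t u)"
  using C1g unfolding C1_flow_def by simp
lemma contG2: "continuous_on ({0..<tbar} \<times> UNIV) (\<lambda>(t,u). partial_u (partial_u gam) t u)"
  using C1gu unfolding C1_flow_def by simp
lemma contGt: "continuous_on ({0..<tbar} \<times> UNIV) (\<lambda>(t,u). partial_t {0..<tbar} (partial_u gam) t u)"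
  using C1gu unfolding C1_flow_def by simp


lemma pG: "t \<in> {0..<tbar} \<Longrightarrow> partial_u gam t (u + 2*pi) = partial_u gam t u"
  by (rule partial_u_periodic) (simp add: perg)
lemma pG2: "t \<in> {0..<tbar} \<Longrightarrow> partial_u (partial_u gam) t (u + 2*pi) = partial_u (partial_u gam) t u"
  by (rule partial_u_periodic) (simp add: pG)
lemma pspeed: "t \<in> {0..<tbar} \<Longrightarrow> speed gam t (u + 2*pi) = speed gam t u"
  by (simp add: speed_def pG)
lemma ptangent: "t \<in> {0..<tbar} \<Longrightarrow> tangent gam t (u + 2*pi) = tangent gam t u"
  by (simp add: tangent_def pG pspeed)
lemma pT': "t \<in> {0..<tbar} \<Longrightarrow> partial_u (tangent gam) t (u + 2*pi) = partial_u (tangent gam) t u"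
  by (rule partial_u_periodic) (simp add: ptangent)
lemma pk: "t \<in> {0..<tbar} \<Longrightarrow> curvature gam t (u + 2*pi) = curvature gam t u"
  by (simp add: curvature_def pT' pspeed)
lemma pN: "t \<in> {0..<tbar} \<Longrightarrow> normal gam t (u + 2*pi) = normal gam t u"
  by (simp add: normal_def pT' pspeed pk)
lemma pnu: "t \<in> {0..<tbar} \<Longrightarrow> nu_theta gam \<theta> t (u + 2*pi) = nu_theta gam \<theta> t u"
  by (simp add: nu_theta_def binormal_def pN ptangent perth)

lemma Gnz: "t \<in> {0..<tbar} \<Longrightarrow> partial_u gam t u \<noteq> 0"
  using spos[of t u] by (auto simp: speed_def)

lemma Tderiv: assumes t: "t \<in> {0..<tbar}"
  shows "((\<lambda>v. tangent gam t v) has_vector_derivative Tp gam t u) (at u)"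
proof -
  have n: "((\<lambda>v. speed gam t v) has_real_derivative
      (partial_u gam t u \<bullet> partial_u (partial_u gam) t u) / speed gam t u) (at u)"
    unfolding speed_def using vd_norm[OF F2[OF t] Gnz[OF t]] by simp
  have i: "((\<lambda>v. inverse (speed gam t v)) has_real_derivative
      - ((partial_u gam t u \<bullet> partial_u (partial_u gam) t u) / speed gam t u * inverse (speed gam t u ^ Suc (Suc 0)))) (at u)"
    using DERIV_inverse_fun[OF n] spos[OF t, of u] by simp
  have "((\<lambda>v. inverse (speed gam t v) *\<^sub>R partial_u gam t v) has_vector_derivative
      (inverse (speed gam t u) *\<^sub>R partial_u (partial_u gam) t u +
       (- ((partial_u gam t u \<bullet> partial_u (partial_u gam) t u) / speed gam t u * inverse (speed gam t u ^ Suc (Suc 0)))) *\<^sub>R partial_u gam t u)) (at u)"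
    by (rule has_vector_derivative_scaleR[OF i F2[OF t]])
  moreover have "inverse (speed gam t u) *\<^sub>R partial_u (partial_u gam) t u +
       (- ((partial_u gam t u \<bullet> partial_u (partial_u gam) t u) / speed gam t u * inverse (speed gam t u ^ Suc (Suc 0)))) *\<^sub>R partial_u gam t u
      = Tp gam t u"
    unfolding Tp_def using spos[OF t, of u]
    by (simp add: field_simps power_def)
  ultimately show ?thesis unfolding tangent_def by (simp add: divide_inverse)
qed

lemma T'eq: "t \<in> {0..<tbar} \<Longrightarrow> partial_u (tangent gam) t u = Tp gam t u"
  unfolding partial_u_def using Tderiv vector_derivative_at by blast


lemma geo: assumes t: "t \<in> {0..<tbar}"
  shows "partial_u (tangent gam) t u \<bullet> (curvature gam t u *\<^sub>R nu_theta gam \<theta> t u)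
     = curvature gam t u * psi1 gam \<theta> t u * speed gam t u"
proof -
  define X where "X = partial_u (tangent gam) t u"
  define g where "g = speed gam t u"
  define k where "k = curvature gam t u"
  define N where "N = normal gam t u"
  have g: "g > 0" using spos[OF t] g_def by simp
  have k: "k > 0" using kpos[OF t] k_def by simp
  have kX: "k = norm X / g" using g unfolding k_def curvature_def X_def g_def by simp
  have N: "N = (1 / (g * k)) *\<^sub>R X" unfolding N_def normal_def X_def g_def k_def by simp
  have XN: "X = (g * k) *\<^sub>R N" using N g k by simp
  have nX: "norm X = g * k" using kX g by simp
  have NN: "N \<bullet> N = 1"
  proof -
    have "N \<bullet> N = (X \<bullet> X) / (g * k)^2" using N by (simp add: power2_eq_square)
    also have "X \<bullet> X = (g*k)^2" using nX by (simp add: power2_norm_eq_inner[symmetric])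
    finally show ?thesis using g k by simp
  qed
  have NB: "N \<bullet> binormal gam t u = 0"
    unfolding binormal_def N_def[symmetric] by (simp add: dot_cross_self)
  have "X \<bullet> (k *\<^sub>R nu_theta gam \<theta> t u) = (g*k) * k * (cos (\<theta> t u) * (N \<bullet> N) + sin (\<theta> t u) * (N \<bullet> binormal gam t u))"
    unfolding XN nu_theta_def N_def[symmetric] by (simp add: inner_add_right algebra_simps)
  also have "\<dots> = k * (k * cos (\<theta> t u)) * g" using NN NB by simp
  finally show ?thesis unfolding X_def k_def g_def psi1_def by simp
qed


lemma Iconv: "convex {0..<tbar}" by (simp add: convex_real_interval)

lemma gam_int: assumes s: "s \<in> {0..<tbar}" and aw: "a \<le> w"
  shows "gam s w - gam s a = integral {a..w} (\<lambda>v. partial_u gam s v)"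
proof -
  have "((\<lambda>v. partial_u gam s v) has_integral (gam s w - gam s a)) {a..w}"
    by (rule fundamental_theorem_of_calculus[OF aw]) (rule has_vector_derivative_at_within[OF F1[OF s]])
  thus ?thesis by (simp add: integral_unique)
qed

lemma Cderiv: assumes t: "t \<in> {0..<tbar}"
  shows "((\<lambda>v. curvature gam t v *\<^sub>R nu_theta gam \<theta> t v) has_vector_derivative
           partial_t {0..<tbar} (partial_u gam) t u) (at u)"
proof -
  define I where "I = {0..<tbar}"
  define W where "W s w = curvature gam s w *\<^sub>R nu_theta gam \<theta> s w" for s w
  define Gt where "Gt s v = partial_t {0..<tbar} (partial_u gam) s v" for s v
  have tI: "t \<in> I" using t I_def by simp
  have key: "W t w - W t a = integral {a..w} (Gt t)" if aw: "a \<le> w" for a w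
  proof -
    have d2: "((\<lambda>s. integral (cbox a w) (\<lambda>v. partial_u gam s v)) has_vector_derivative
          integral (cbox a w) (Gt t)) (at t within I)"
    proof (rule leibniz_rule_vector_derivative[OF _ _ _ tI])
      show "((\<lambda>x. partial_u gam x v) has_vector_derivative Gt x v) (at x within I)" if "x \<in> I" for x v
        using F3 that unfolding I_def Gt_def by blast
      show "(\<lambda>v. partial_u gam x v) integrable_on cbox a w" if "x \<in> I" for x
        unfolding cbox_interval
        by (rule integrable_continuous_interval, rule cont_slice[OF contG]) (use that I_def in auto)
      show "continuous_on (I \<times> cbox a w) (\<lambda>(x, v). Gt x v)"
        unfolding Gt_def I_def by (rule continuous_on_subset[OF contGt]) auto
      show "convex I" using Iconv I_def by simp
    qed
    have d3: "((\<lambda>s. gam s w - gam s a) has_vector_derivative W t w - W t a) (at t within I)"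
      unfolding W_def I_def by (intro has_vector_derivative_diff floweq t)
    have d4: "((\<lambda>s. gam s w - gam s a) has_vector_derivative integral (cbox a w) (Gt t)) (at t within I)"
      by (rule has_vector_derivative_transform_within[OF d2 zero_less_one tI])
         (simp add: gam_int aw I_def cbox_interval)
    have "W t w - W t a = integral (cbox a w) (Gt t)"
      by (rule vector_derivative_unique_within[OF _ d3 d4]) (use t not_bot_Ico[of t tbar] in \<open>auto simp: I_def\<close>)
    thus ?thesis by (simp add: cbox_interval)
  qed
  define a where "a = u - 1"
  define b where "b = u + 1"
  have cGt: "continuous_on {a..b} (Gt t)"
    unfolding Gt_def by (rule cont_slice[OF contGt t])
  have "((\<lambda>w. integral {a..w} (Gt t)) has_vector_derivative Gt t u) (at u within {a..b})"
    by (rule integral_has_vector_derivative[OF cGt]) (auto simp: a_def b_def)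
  moreover have "at u within {a..b} = at u"
    by (rule at_within_interior) (auto simp: a_def b_def)
  ultimately have "((\<lambda>w. integral {a..w} (Gt t)) has_vector_derivative Gt t u) (at u)" by simp
  hence "((\<lambda>w. W t a + integral {a..w} (Gt t)) has_vector_derivative Gt t u) (at u)"
    using has_vector_derivative_add[OF has_vector_derivative_const] by fastforce
  hence "((\<lambda>w. W t w) has_vector_derivative Gt t u) (at u)"
  proof (rule has_vector_derivative_transform_within_open[where S="{a<..<b}"])
    show "W t a + integral {a..y} (Gt t) = W t y" if "y \<in> {a<..<b}" for y
      using key[of a y] that by (simp add: algebra_simps eq_diff_eq)
  qed (auto simp: a_def b_def)
  thus ?thesis unfolding W_def Gt_def .
qed


lemma contT_Gt: assumes t: "t \<in> {0..<tbar}"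
  shows "continuous_on S (\<lambda>u. tangent gam t u \<bullet> partial_t {0..<tbar} (partial_u gam) t u)"
  unfolding tangent_def speed_def
  by (intro continuous_intros cont_slice[OF contG t] cont_slice[OF contGt t]) (use Gnz[OF t] in auto)

lemma IBP: assumes t: "t \<in> {0..<tbar}"
  shows "integral {0..2*pi} (\<lambda>u. tangent gam t u \<bullet> partial_t {0..<tbar} (partial_u gam) t u)
       = - integral {0..2*pi} (\<lambda>u. curvature gam t u * psi1 gam \<theta> t u * speed gam t u)"
proof -
  define W where "W w = curvature gam t w *\<^sub>R nu_theta gam \<theta> t w" for w
  define Gt where "Gt v = partial_t {0..<tbar} (partial_u gam) t v" for v
  define T where "T v = tangent gam t v" for v
  define T' where "T' v = partial_u (tangent gam) t v" for v
  have dT: "(T has_vector_derivative T' u) (at u)" for u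
    unfolding T_def T'_def using Tderiv[OF t] T'eq[OF t] by simp
  have dW: "(W has_vector_derivative Gt u) (at u)" for u
    unfolding W_def Gt_def using Cderiv[OF t] by simp
  have dP: "((\<lambda>u. T u \<bullet> W u) has_vector_derivative (T u \<bullet> Gt u + T' u \<bullet> W u)) (at u within {0..2*pi})" for u
    by (rule has_vector_derivative_at_within, rule bounded_bilinear.has_vector_derivative[OF bounded_bilinear_inner dT dW])
  have "((\<lambda>u. T u \<bullet> Gt u + T' u \<bullet> W u) has_integral (T (2*pi) \<bullet> W (2*pi) - T 0 \<bullet> W 0)) {0..2*pi}"
    by (rule fundamental_theorem_of_calculus) (use dP in auto)
  moreover have "T (2*pi) \<bullet> W (2*pi) = T 0 \<bullet> W 0"
    using ptangent[OF t, of 0] pk[OF t, of 0] pnu[OF t, of 0] by (simp add: T_def W_def)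
  ultimately have h1: "((\<lambda>u. T u \<bullet> Gt u + T' u \<bullet> W u) has_integral 0) {0..2*pi}" by simp
  have h2: "((\<lambda>u. T u \<bullet> Gt u) has_integral integral {0..2*pi} (\<lambda>u. T u \<bullet> Gt u)) {0..2*pi}"
    unfolding T_def Gt_def by (rule integrable_integral, rule integrable_continuous_interval, rule contT_Gt[OF t])
  have "((\<lambda>u. T' u \<bullet> W u) has_integral (0 - integral {0..2*pi} (\<lambda>u. T u \<bullet> Gt u))) {0..2*pi}"
    using has_integral_diff[OF h1 h2] by simp
  moreover have "(\<lambda>u. T' u \<bullet> W u) = (\<lambda>u. curvature gam t u * psi1 gam \<theta> t u * speed gam t u)"
    by (rule ext) (simp only: T'_def W_def geo[OF t])
  ultimately have "((\<lambda>u. curvature gam t u * psi1 gam \<theta> t u * speed gam t u) has_integral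
          (- integral {0..2*pi} (\<lambda>u. T u \<bullet> Gt u))) {0..2*pi}"
    by simp
  hence "integral {0..2*pi} (\<lambda>u. curvature gam t u * psi1 gam \<theta> t u * speed gam t u)
      = - integral {0..2*pi} (\<lambda>u. T u \<bullet> Gt u)" by (rule integral_unique)
  thus ?thesis unfolding T_def Gt_def by simp
qed

lemma part1: assumes t: "t \<in> {0..<tbar}"
  shows "((\<lambda>s. curve_length gam s) has_real_derivative
            - integral {0..2*pi} (\<lambda>u. curvature gam t u * psi1 gam \<theta> t u * speed gam t u))
           (at t within {0..<tbar})"
proof -
  define I where "I = {0..<tbar}"
  define Gt where "Gt s v = partial_t {0..<tbar} (partial_u gam) s v" for s v
  have tI: "t \<in> I" using t I_def by simp
  have cont: "continuous_on (I \<times> UNIV) (\<lambda>p. (partial_u gam (fst p) (snd p) \<bullet> Gt (fst p) (snd p)) / norm (partial_u gam (fst p) (snd p)))"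
    unfolding Gt_def I_def
    by (intro continuous_intros cont_fst_snd[OF contG] cont_fst_snd[OF contGt]) (use Gnz in auto)
  have "((\<lambda>s. integral (cbox 0 (2*pi)) (\<lambda>u. speed gam s u)) has_field_derivative
          integral (cbox 0 (2*pi)) (\<lambda>u. (partial_u gam t u \<bullet> Gt t u) / speed gam t u)) (at t within I)"
  proof (rule leibniz_rule_field_derivative[OF _ _ _ tI])
    show "((\<lambda>x. speed gam x v) has_field_derivative (partial_u gam x v \<bullet> Gt x v) / speed gam x v) (at x within I)"
      if "x \<in> I" for x v
      unfolding speed_def Gt_def using vd_norm[OF F3 Gnz] that I_def by simp
    show "(\<lambda>v. speed gam x v) integrable_on cbox 0 (2*pi)" if "x \<in> I" for x
      unfolding cbox_interval speed_def
      by (rule integrable_continuous_interval, intro continuous_intros, rule cont_slice[OF contG]) (use that I_def in auto)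
    show "continuous_on (I \<times> cbox 0 (2*pi)) (\<lambda>(x, v). (partial_u gam x v \<bullet> Gt x v) / speed gam x v)"
    proof -
      have "continuous_on (I \<times> cbox 0 (2*pi)) (\<lambda>p. (partial_u gam (fst p) (snd p) \<bullet> Gt (fst p) (snd p)) / norm (partial_u gam (fst p) (snd p)))"
        by (rule continuous_on_subset[OF cont]) auto
      thus ?thesis by (simp add: case_prod_beta speed_def)
    qed
    show "convex I" using Iconv I_def by simp
  qed
  moreover have "(\<lambda>u. (partial_u gam t u \<bullet> Gt t u) / speed gam t u) = (\<lambda>u. tangent gam t u \<bullet> Gt t u)"
    by (auto simp: tangent_def)
  ultimately show ?thesis using IBP[OF t]
    by (simp add: cbox_interval curve_length_def Gt_def I_def)
qed


lemma contSK: "continuous_on ({0..<tbar} \<times> UNIV) (\<lambda>(s,u). speed gam s u * curvature gam s u)"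
proof -
  define G where "G p = partial_u gam (fst p) (snd p)" for p
  define G2 where "G2 p = partial_u (partial_u gam) (fst p) (snd p)" for p
  have c: "continuous_on ({0..<tbar} \<times> UNIV) (\<lambda>p. norm (G p) * norm ((1 / norm (G p)) *\<^sub>R
      ((1 / norm (G p)) *\<^sub>R G2 p - ((G p \<bullet> G2 p) / norm (G p)^3) *\<^sub>R G p)))"
    unfolding G_def G2_def
    by (intro continuous_intros cont_fst_snd[OF contG] cont_fst_snd[OF contG2]) (use Gnz in auto)
  show ?thesis
  proof (rule continuous_on_cong[THEN iffD1, OF refl _ c])
    fix p assume "p \<in> {0..<tbar} \<times> (UNIV::real set)"
    hence "fst p \<in> {0..<tbar}" by auto
    thus "norm (G p) * norm ((1 / norm (G p)) *\<^sub>R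
      ((1 / norm (G p)) *\<^sub>R G2 p - ((G p \<bullet> G2 p) / norm (G p)^3) *\<^sub>R G p))
       = (case p of (s,u) \<Rightarrow> speed gam s u * curvature gam s u)"
      by (simp add: case_prod_beta curvature_def T'eq Tp_def speed_def G_def G2_def)
  qed
qed

lemma part2: assumes t: "t \<in> {0..<tbar}"
  shows "((\<lambda>s. traj_area gam s) has_real_derivative
            integral {0..2*pi} (\<lambda>u. curvature gam t u * speed gam t u))
           (at t within {0..<tbar})"
proof -
  define h where "h s = integral {0..2*pi} (\<lambda>u. speed gam s u * curvature gam s u)" for s
  have ch: "continuous_on {0..<tbar} h"
  proof -
    have "continuous_on ({0..<tbar} \<times> cbox 0 (2*pi)) (\<lambda>(s,u). speed gam s u * curvature gam s u)"
      by (rule continuous_on_subset[OF contSK]) auto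
    from integral_continuous_on_param[OF this] show ?thesis by (simp add: h_def cbox_interval)
  qed
  define b where "b = (t + tbar) / 2"
  have tb: "t < b" "b < tbar" "0 \<le> t" using t by (auto simp: b_def)
  have "continuous_on {0..b} h" by (rule continuous_on_subset[OF ch]) (use tb in auto)
  from integral_has_vector_derivative[OF this, of t] tb
  have d: "((\<lambda>s. integral {0..s} h) has_vector_derivative h t) (at t within {0..b})" by simp
  have "at t within {0..b} = at t within {0..<tbar}"
    by (rule at_within_nhd[where S="{-1<..<b}"]) (use tb in auto)
  with d have "((\<lambda>s. integral {0..s} h) has_real_derivative h t) (at t within {0..<tbar})"
    by (simp add: has_real_derivative_iff_has_vector_derivative)
  thus ?thesis unfolding traj_area_def h_def by (simp add: mult.commute)
qed

end

theorem mainTheorem7: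
  fixes tbar :: real and gam :: "real \<Rightarrow> real \<Rightarrow> real^3"
    and \<theta> \<upsilon> :: "real \<Rightarrow> real \<Rightarrow> real"
  assumes "framed_curvature_flow tbar gam \<theta> \<upsilon>"
    and "t \<in> {0..<tbar}"
  shows "((\<lambda>s. curve_length gam s) has_real_derivative
            - integral {0..2*pi} (\<lambda>u. curvature gam t u * psi1 gam \<theta> t u * speed gam t u))
           (at t within {0..<tbar}) \<and>
         ((\<lambda>s. traj_area gam s) has_real_derivative
            integral {0..2*pi} (\<lambda>u. curvature gam t u * speed gam t u))
           (at t within {0..<tbar})"
  using part1[OF assms] part2[OF assms] by simp

end
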